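(* Suppose $\vdash(\nu P)\,\Pi\vec\varsigma$. Let $p,q\in P$ such that the sub-states $p\mapsto c$ and $q\mapsto\overline c$ occur in $\vec\varsigma$. Then $(\nu P)\,\Pi\vec\varsigma\to^\star(\nu P)\,\Pi\vec{\varsigma'}$ for some $\vec{\varsigma'}$ in which $\odot_c$ occurs.
   Context: Abstract machine: states $\sigma::=\sigma|\sigma'\mid(\nu p)\sigma\mid\varsigma$ with sub-states $p\mapsto\alpha$, $\mathsf{Candidate}_p$, $\alpha$ (points; actions $\alpha$ are $c$ or $\overline c$ for a channel $c$); $\odot_c$, $\mathsf{Match}_c(p,q)$ (channels); $\Box_s,\boxtimes_s,\mathsf{Select}_s(p),\mathsf{Reject}(p),\mathsf{Done}_s(p),\mathsf{Retry}_s$ (synchronizers), where a synchronizer $s$ is a finite partial function from points to actions written as a parallel composition of bindings $p\mapsto\alpha$, distinct synchronizers having disjoint domains. Transitions (closed under pi-calculus structural rules for $|$ and $\nu$): (I) $p\mapsto c|q\mapsto\overline c|\odot_c\to\mathsf{Candidate}_p|\mathsf{Candidate}_q|\mathsf{Match}_c(p,q)$; (II.i) for $p\in\mathrm{dom}(s)$, $\mathsf{Candidate}_p|\Box_s\to\boxtimes_s|\mathsf{Select}_s(p)$; (II.ii) for $p\in\mathrm{dom}(s)$, $\mathsf{Candidate}_p|\boxtimes_s\to\boxtimes_s|\mathsf{Reject}(p)$; (III.i) $\mathsf{Select}_s(p)|\mathsf{Select}_{s'}(q)|\mathsf{Match}_c(p,q)\to\mathsf{Done}_s(p)|\mathsf{Done}_{s'}(q)|\odot_c$;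 (III.ii) $\mathsf{Select}_s(p)|\mathsf{Reject}(q)|\mathsf{Match}_c(p,q)\to\mathsf{Retry}_s|\odot_c$; (III.iii) $\mathsf{Reject}(p)|\mathsf{Select}_s(q)|\mathsf{Match}_c(p,q)\to\mathsf{Retry}_s|\odot_c$; (III.iv) $\mathsf{Reject}(p)|\mathsf{Reject}(q)|\mathsf{Match}_c(p,q)\to\odot_c$; (IV.i) if $s(p)=\alpha$, $\mathsf{Done}_s(p)\to\alpha$; (IV.ii) if $\mathrm{dom}(s)=\vec p$, $\mathsf{Retry}_s\to(\nu\vec p)(\Box_s|s)$. Invariant $\vdash(\nu P)\Pi\vec\varsigma$, where $P$ is the set of points in $\vec\varsigma$, $\mathcal C$ the set of channels, $\mathcal S$ the set of synchronizers, $\mathcal C\cap P=\varnothing$, holds iff: (1) for every $p\in P$ there is a unique $s\in\mathcal S$ with $p\in\mathrm{dom}(s)$; letting $s(p)=\alpha$, at most one of $p\mapsto\alpha,\mathsf{Candidate}_p,\mathsf{Select}_s(p),\mathsf{Reject}(p),\mathsf{Done}_s(p),\mathsf{Retry}_s$ occurs in $\vec\varsigma$, and exactly one of $\Box_s,\boxtimes_s$ occurs; (2) for every $c\in\mathcal C$ exactly one of $\odot_c$ and $\mathsf{Match}_c(\_,\_)$ occurs; (3) for $p\in\mathrm{dom}(s)$: if one of $\mathsf{Select}_s(p),\mathsf{Reject}(p),\mathsf{Done}_s(p),\mathsf{Retry}_s$ occurs then $\boxtimes_s$ occurs; and if $\boxtimes_s$ occurs then there is at most one $p\in\mathrm{dom}(s)$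 such that one of $\mathsf{Select}_s(p),\mathsf{Done}_s(p),\mathsf{Retry}_s$ occurs; (4) $\mathsf{Match}_c(p,q)$ occurs iff there are (not necessarily distinct) $s,s'\in\mathcal S$ with $s(p)=c$, $s'(q)=\overline c$, one of $\mathsf{Candidate}_p,\mathsf{Select}_s(p),\mathsf{Reject}(p)$ occurring, and one of $\mathsf{Candidate}_q,\mathsf{Select}_{s'}(q),\mathsf{Reject}(q)$ occurring. *)

theory Defs
  imports Main "HOL-Library.Multiset"
begin

text \<open>Names: points and channels are drawn from one name type 'n
  (the invariant requires the set of channels and the set of points to be disjoint).\<close>

datatype 'n act = Chan 'n | CoChan 'n

fun act_chan :: "'n act \<Rightarrow> 'n" where
  "act_chan (Chan c) = c"
| "act_chan (CoChan c) = c"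

type_synonym 'n sync = "'n \<rightharpoonup> 'n act"

datatype 'n sub =
    Bind 'n "'n act"
  | Cand 'n
  | Act "'n act"
  | Circ 'n                     \<comment> \<open>\<odot>_c\<close>
  | Match 'n 'n 'n
  | SBox "'n sync"              \<comment> \<open>\<box>_s\<close>
  | SBoxX "'n sync"             \<comment> \<open>\<boxtimes>_s\<close>
  | Select "'n sync" 'n
  | Reject 'n
  | Done "'n sync" 'n
  | Retry "'n sync"

fun sub_points :: "'n sub \<Rightarrow> 'n set" where
  "sub_points (Bind p a) = {p}"
| "sub_points (Cand p) = {p}"
| "sub_points (Act a) = {}"
| "sub_points (Circ c) = {}"
| "sub_points (Match c p q) = {p, q}"
| "sub_points (SBox s) = dom s"
| "sub_points (SBoxX s) = dom s"
| "sub_points (Select s p) = insert p (dom s)"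
| "sub_points (Reject p) = {p}"
| "sub_points (Done s p) = insert p (dom s)"
| "sub_points (Retry s) = dom s"

fun sub_chans :: "'n sub \<Rightarrow> 'n set" where
  "sub_chans (Bind p a) = {act_chan a}"
| "sub_chans (Cand p) = {}"
| "sub_chans (Act a) = {act_chan a}"
| "sub_chans (Circ c) = {c}"
| "sub_chans (Match c p q) = {c}"
| "sub_chans (SBox s) = act_chan ` ran s"
| "sub_chans (SBoxX s) = act_chan ` ran s"
| "sub_chans (Select s p) = act_chan ` ran s"
| "sub_chans (Reject p) = {}"
| "sub_chans (Done s p) = act_chan ` ran s"
| "sub_chans (Retry s) = act_chan ` ran s"

fun sub_syncs :: "'n sub \<Rightarrow> 'n sync set" where
  "sub_syncs (SBox s) = {s}"
| "sub_syncs (SBoxX s) = {s}"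
| "sub_syncs (Select s p) = {s}"
| "sub_syncs (Done s p) = {s}"
| "sub_syncs (Retry s) = {s}"
| "sub_syncs _ = {}"

definition points :: "'n sub multiset \<Rightarrow> 'n set" where
  "points M = \<Union> (sub_points ` set_mset M)"

definition chans :: "'n sub multiset \<Rightarrow> 'n set" where
  "chans M = \<Union> (sub_chans ` set_mset M)"

definition syncs :: "'n sub multiset \<Rightarrow> 'n sync set" where
  "syncs M = \<Union> (sub_syncs ` set_mset M)"

definition sync_bindings :: "'n sync \<Rightarrow> 'n sub multiset" where
  "sync_bindings s = image_mset (\<lambda>p. Bind p (the (s p))) (mset_set (dom s))"

text \<open>A state (\<nu>P) \<Pi>\<varsigma> is represented by the pair (P, M), M the multiset of sub-states.
  Parallel composition is multiset union; closure under the structural rules for |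
  is expressed by the frame R.  Rule (IV.ii) creates a fresh copy (\<nu>p')(\<box>_s'|s') of s,
  with s' an alpha-renaming of s to names fresh for the whole state; by scope
  extrusion these names are added to the top-level binder.\<close>
inductive step :: "'n set \<times> 'n sub multiset \<Rightarrow> 'n set \<times> 'n sub multiset \<Rightarrow> bool" where
  r1: "step (P, {#Bind p (Chan c), Bind q (CoChan c), Circ c#} + R)
            (P, {#Cand p, Cand q, Match c p q#} + R)"
| r2i: "p \<in> dom s \<Longrightarrow> step (P, {#Cand p, SBox s#} + R) (P, {#SBoxX s, Select s p#} + R)"
| r2ii: "p \<in> dom s \<Longrightarrow> step (P, {#Cand p, SBoxX s#} + R) (P, {#SBoxX s, Reject p#} + R)"
| r3i: "step (P, {#Select s p, Select s' q, Match c p q#} + R)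
             (P, {#Done s p, Done s' q, Circ c#} + R)"
| r3ii: "step (P, {#Select s p, Reject q, Match c p q#} + R) (P, {#Retry s, Circ c#} + R)"
| r3iii: "step (P, {#Reject p, Select s q, Match c p q#} + R) (P, {#Retry s, Circ c#} + R)"
| r3iv: "step (P, {#Reject p, Reject q, Match c p q#} + R) (P, {#Circ c#} + R)"
| r4i: "s p = Some a \<Longrightarrow> step (P, {#Done s p#} + R) (P, {#Act a#} + R)"
| r4ii: "\<lbrakk> inj_on \<rho> (dom s); dom s' = \<rho> ` dom s; \<forall>p\<in>dom s. s' (\<rho> p) = s p;
           dom s' \<inter> (P \<union> points ({#Retry s#} + R) \<union> chans ({#Retry s#} + R)) = {} \<rbrakk>
         \<Longrightarrow> step (P, {#Retry s#} + R) (P \<union> dom s', {#SBox s'#} + sync_bindings s' + R)"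

definition match_count :: "'n sub multiset \<Rightarrow> 'n \<Rightarrow> nat" where
  "match_count M c = size (filter_mset (\<lambda>x. \<exists>p q. x = Match c p q) M)"

text \<open>The invariant \<turnstile> (\<nu>P) \<Pi>\<varsigma>.\<close>
definition wf_state :: "'n set \<Rightarrow> 'n sub multiset \<Rightarrow> bool" where
  "wf_state P M \<longleftrightarrow>
     P = points M \<and> chans M \<inter> P = {} \<and>
     (\<forall>s\<in>syncs M. finite (dom s)) \<and>
     (\<forall>s\<in>syncs M. \<forall>s'\<in>syncs M. s \<noteq> s' \<longrightarrow> dom s \<inter> dom s' = {}) \<and>
     \<comment> \<open>(1)\<close>
     (\<forall>p\<in>P. (\<exists>!s. s \<in> syncs M \<and> p \<in> dom s) \<and>
        (\<forall>s\<in>syncs M. p \<in> dom s \<longrightarrow>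
           count M (Bind p (the (s p))) + count M (Cand p) + count M (Select s p)
             + count M (Reject p) + count M (Done s p) + count M (Retry s) \<le> 1
           \<and> count M (SBox s) + count M (SBoxX s) = 1)) \<and>
     \<comment> \<open>(2)\<close>
     (\<forall>c\<in>chans M. count M (Circ c) + match_count M c = 1) \<and>
     \<comment> \<open>(3)\<close>
     (\<forall>s\<in>syncs M.
        (\<forall>p\<in>dom s. (Select s p \<in># M \<or> Reject p \<in># M \<or> Done s p \<in># M \<or> Retry s \<in># M)
                     \<longrightarrow> SBoxX s \<in># M) \<and>
        (SBoxX s \<in># M \<longrightarrow>
           (\<Sum>p\<in>dom s. count M (Select s p) + count M (Done s p)) + count M (Retry s) \<le> 1)) \<and>
     \<comment> \<open>(4)\<close>
     (\<forall>c p q. Match c p q \<in># M \<longleftrightarrow>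
        (\<exists>s\<in>syncs M. \<exists>s'\<in>syncs M. s p = Some (Chan c) \<and> s' q = Some (CoChan c) \<and>
           (Cand p \<in># M \<or> Select s p \<in># M \<or> Reject p \<in># M) \<and>
           (Cand q \<in># M \<or> Select s' q \<in># M \<or> Reject q \<in># M)))"

end

theory Submission
  imports Defs
begin

lemma sub2: "a \<in># N \<Longrightarrow> b \<in># N \<Longrightarrow> a \<noteq> b \<Longrightarrow> {#a, b#} \<subseteq># N"
  by (auto simp: subseteq_mset_def Suc_le_eq)

lemma sub3: "a \<in># N \<Longrightarrow> b \<in># N \<Longrightarrow> d \<in># N \<Longrightarrow> a \<noteq> b \<Longrightarrow> a \<noteq> d \<Longrightarrow> b \<noteq> d
   \<Longrightarrow> {#a, b, d#} \<subseteq># N"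
  by (auto simp: subseteq_mset_def Suc_le_eq)

lemma keep2: "y \<in># N \<Longrightarrow> y \<noteq> a \<Longrightarrow> y \<noteq> b \<Longrightarrow> y \<in># N - {#a, b#}"
  by (simp add: in_diff_count)

lemma step_cand:
  assumes "Cand x \<in># N" "x \<in> dom t" "SBox t \<in># N \<or> SBoxX t \<in># N"
  shows "\<exists>N'. step (P, N) (P, N') \<and> (Select t x \<in># N' \<or> Reject x \<in># N') \<and> SBoxX t \<in># N'
     \<and> (\<forall>y. y \<in># N \<longrightarrow> y \<noteq> Cand x \<longrightarrow> y \<noteq> SBox t \<longrightarrow> y \<in># N')"
proof (cases "SBox t \<in># N")
  case True
  have s: "{#Cand x, SBox t#} \<subseteq># N" using True assms(1) by (intro sub2) auto
  hence e: "N = {#Cand x, SBox t#} + (N - {#Cand x, SBox t#})"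
    by (rule subset_mset.add_diff_inverse[symmetric])
  have "step (P, N) (P, {#SBoxX t, Select t x#} + (N - {#Cand x, SBox t#}))"
    using step.r2i[OF assms(2), of P "N - {#Cand x, SBox t#}"] e by simp
  thus ?thesis by (intro exI[of _ "{#SBoxX t, Select t x#} + (N - {#Cand x, SBox t#})"])
      (auto intro: keep2)
next
  case False
  hence B: "SBoxX t \<in># N" using assms(3) by auto
  have s: "{#Cand x, SBoxX t#} \<subseteq># N" using B assms(1) by (intro sub2) auto
  hence e: "N = {#Cand x, SBoxX t#} + (N - {#Cand x, SBoxX t#})"
    by (rule subset_mset.add_diff_inverse[symmetric])
  have "step (P, N) (P, {#SBoxX t, Reject x#} + (N - {#Cand x, SBoxX t#}))"
    using step.r2ii[OF assms(2), of P "N - {#Cand x, SBoxX t#}"] e by simp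
  thus ?thesis using B
    by (intro exI[of _ "{#SBoxX t, Reject x#} + (N - {#Cand x, SBoxX t#})"])
      (auto intro: keep2)
qed

lemma step_fin:
  assumes "Match c x y \<in># N" "x \<noteq> y"
    "Select t x \<in># N \<or> Reject x \<in># N" "Select t' y \<in># N \<or> Reject y \<in># N"
  shows "\<exists>N'. step (P, N) (P, N') \<and> Circ c \<in># N'"
proof -
  { fix a b assume ab: "a \<in># N" "b \<in># N" "a \<noteq> b" "a \<noteq> Match c x y" "b \<noteq> Match c x y"
    have "{#a, b, Match c x y#} \<subseteq># N" using ab assms(1) by (intro sub3) auto
    hence "N = {#a, b, Match c x y#} + (N - {#a, b, Match c x y#})"
      by (rule subset_mset.add_diff_inverse[symmetric]) }
  note E = this
  show ?thesis
    using assms(3,4)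
  proof (elim disjE)
    assume h: "Select t x \<in># N" "Select t' y \<in># N"
    from E[OF h] assms(2) have "step (P, N) (P, {#Done t x, Done t' y, Circ c#} + (N - {#Select t x, Select t' y, Match c x y#}))"
      using step.r3i[of P t x t' y c "N - {#Select t x, Select t' y, Match c x y#}"] by simp
    thus ?thesis by auto
  next
    assume h: "Select t x \<in># N" "Reject y \<in># N"
    from E[OF h] have "step (P, N) (P, {#Retry t, Circ c#} + (N - {#Select t x, Reject y, Match c x y#}))"
      using step.r3ii[of P t x y c "N - {#Select t x, Reject y, Match c x y#}"] by simp
    thus ?thesis by auto
  next
    assume h: "Reject x \<in># N" "Select t' y \<in># N"
    from E[OF h] have "step (P, N) (P, {#Retry t', Circ c#} + (N - {#Reject x, Select t' y, Match c x y#}))"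
      using step.r3iii[of P x t' y c "N - {#Reject x, Select t' y, Match c x y#}"] by simp
    thus ?thesis by auto
  next
    assume h: "Reject x \<in># N" "Reject y \<in># N"
    from E[OF h] assms(2) have "step (P, N) (P, {#Circ c#} + (N - {#Reject x, Reject y, Match c x y#}))"
      using step.r3iv[of P x y c "N - {#Reject x, Reject y, Match c x y#}"] by simp
    thus ?thesis by auto
  qed
qed


theorem mainTheorem3:
  fixes P :: "'n set" and M :: "'n sub multiset" and p q c :: 'n
  assumes "wf_state P M"
    and "p \<in> P" and "q \<in> P"
    and "Bind p (Chan c) \<in># M" and "Bind q (CoChan c) \<in># M"
  shows "\<exists>M'. step\<^sup>*\<^sup>* (P, M) (P, M') \<and> Circ c \<in># M'"
proof (cases "Circ c \<in># M")
  case True thus ?thesis by blast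
next
  case False
  have W0: "P = points M" using assms(1) unfolding wf_state_def by (elim conjE) assumption
  have Wd: "\<forall>s\<in>syncs M. \<forall>s'\<in>syncs M. s \<noteq> s' \<longrightarrow> dom s \<inter> dom s' = {}"
    using assms(1) unfolding wf_state_def by (elim conjE) assumption
  have W1: "\<forall>p\<in>P. (\<exists>!s. s \<in> syncs M \<and> p \<in> dom s) \<and>
        (\<forall>s\<in>syncs M. p \<in> dom s \<longrightarrow>
           count M (Bind p (the (s p))) + count M (Cand p) + count M (Select s p)
             + count M (Reject p) + count M (Done s p) + count M (Retry s) \<le> 1
           \<and> count M (SBox s) + count M (SBoxX s) = 1)"
    using assms(1) unfolding wf_state_def by (elim conjE) assumption
  have W2: "\<forall>c\<in>chans M. count M (Circ c) + match_count M c = 1"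
    using assms(1) unfolding wf_state_def by (elim conjE) assumption
  have W4: "\<forall>c p q. Match c p q \<in># M \<longleftrightarrow>
        (\<exists>s\<in>syncs M. \<exists>s'\<in>syncs M. s p = Some (Chan c) \<and> s' q = Some (CoChan c) \<and>
           (Cand p \<in># M \<or> Select s p \<in># M \<or> Reject p \<in># M) \<and>
           (Cand q \<in># M \<or> Select s' q \<in># M \<or> Reject q \<in># M))"
    using assms(1) unfolding wf_state_def by (elim conjE) assumption
  have cc: "c \<in> chans M" using assms(4) unfolding chans_def by force
  hence "count M (Circ c) + match_count M c = 1" using W2 by blast
  hence "match_count M c = 1" using False by (simp add: not_in_iff)
  hence "filter_mset (\<lambda>x. \<exists>p q. x = Match c p q) M \<noteq> {#}" unfolding match_count_def by (metis one_neq_zero size_empty)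
  then obtain z where "z \<in># filter_mset (\<lambda>x. \<exists>p q. x = Match c p q) M"
    by (meson multiset_nonemptyE)
  then obtain x y where mxy: "Match c x y \<in># M" by auto
  have "\<exists>s\<in>syncs M. \<exists>s'\<in>syncs M. s x = Some (Chan c) \<and> s' y = Some (CoChan c) \<and>
           (Cand x \<in># M \<or> Select s x \<in># M \<or> Reject x \<in># M) \<and>
           (Cand y \<in># M \<or> Select s' y \<in># M \<or> Reject y \<in># M)"
    using iffD1[OF spec[OF spec[OF spec[OF W4, of c], of x], of y] mxy] .
  then obtain t t' where tt: "t \<in> syncs M" "t' \<in> syncs M" "t x = Some (Chan c)" "t' y = Some (CoChan c)"
    and sx: "Cand x \<in># M \<or> Select t x \<in># M \<or> Reject x \<in># M"
    and sy: "Cand y \<in># M \<or> Select t' y \<in># M \<or> Reject y \<in># M"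
    by blast
  have xP: "x \<in> P" "y \<in> P" using mxy W0 unfolding points_def by force+
  have xy: "x \<noteq> y"
  proof
    assume "x = y"
    hence "t \<noteq> t'" using tt by auto
    hence "dom t \<inter> dom t' = {}" using Wd tt by blast
    thus False using tt \<open>x = y\<close> by auto
  qed
  have "count M (SBox t) + count M (SBoxX t) = 1"
  proof -
    have "\<forall>s\<in>syncs M. x \<in> dom s \<longrightarrow>
           count M (Bind x (the (s x))) + count M (Cand x) + count M (Select s x)
             + count M (Reject x) + count M (Done s x) + count M (Retry s) \<le> 1
           \<and> count M (SBox s) + count M (SBoxX s) = 1"
      using bspec[OF W1 xP(1)] by (rule conjunct2)
    moreover have "x \<in> dom t" using tt(3) by blast
    ultimately show ?thesis using tt(1) by blast
  qed
  hence bx: "SBox t \<in># M \<or> SBoxX t \<in># M" by (metis add_cancel_left_left count_eq_zero_iff zero_neq_one)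
  have "count M (SBox t') + count M (SBoxX t') = 1"
  proof -
    have "\<forall>s\<in>syncs M. y \<in> dom s \<longrightarrow>
           count M (Bind y (the (s y))) + count M (Cand y) + count M (Select s y)
             + count M (Reject y) + count M (Done s y) + count M (Retry s) \<le> 1
           \<and> count M (SBox s) + count M (SBoxX s) = 1"
      using bspec[OF W1 xP(2)] by (rule conjunct2)
    moreover have "y \<in> dom t'" using tt(4) by blast
    ultimately show ?thesis using tt(2) by blast
  qed
  hence by': "SBox t' \<in># M \<or> SBoxX t' \<in># M" by (metis add_cancel_left_left count_eq_zero_iff zero_neq_one)
  obtain M1 where M1: "step\<^sup>*\<^sup>* (P, M) (P, M1)" "Select t x \<in># M1 \<or> Reject x \<in># M1"
    "Match c x y \<in># M1" "Cand y \<in># M1 \<or> Select t' y \<in># M1 \<or> Reject y \<in># M1"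
    "SBox t' \<in># M1 \<or> SBoxX t' \<in># M1"
  proof (cases "Cand x \<in># M")
    case True
    from step_cand[OF True _ bx, of P] tt obtain N' where N': "step (P, M) (P, N')"
      "Select t x \<in># N' \<or> Reject x \<in># N'" "SBoxX t \<in># N'"
      "\<forall>ya. ya \<in># M \<longrightarrow> ya \<noteq> Cand x \<longrightarrow> ya \<noteq> SBox t \<longrightarrow> ya \<in># N'" by blast
    show ?thesis
    proof (rule that[of N'])
      show "step\<^sup>*\<^sup>* (P, M) (P, N')" using N'(1) by blast
      show "Select t x \<in># N' \<or> Reject x \<in># N'" by fact
      show "Match c x y \<in># N'" using N'(4) mxy by blast
      show "Cand y \<in># N' \<or> Select t' y \<in># N' \<or> Reject y \<in># N'" using N'(4) sy xy by blast
      show "SBox t' \<in># N' \<or> SBoxX t' \<in># N'" using N'(3,4) by' by blast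
    qed
  next
    case False
    show ?thesis by (rule that[of M]) (use False sx sy mxy by' in auto)
  qed
  obtain M2 where M2: "step\<^sup>*\<^sup>* (P, M1) (P, M2)" "Select t x \<in># M2 \<or> Reject x \<in># M2"
    "Match c x y \<in># M2" "Select t' y \<in># M2 \<or> Reject y \<in># M2"
  proof (cases "Cand y \<in># M1")
    case True
    from step_cand[OF True _ M1(5), of P] tt obtain N' where N': "step (P, M1) (P, N')"
      "Select t' y \<in># N' \<or> Reject y \<in># N'"
      "\<forall>ya. ya \<in># M1 \<longrightarrow> ya \<noteq> Cand y \<longrightarrow> ya \<noteq> SBox t' \<longrightarrow> ya \<in># N'" by blast
    show ?thesis
    proof (rule that[of N'])
      show "step\<^sup>*\<^sup>* (P, M1) (P, N')" using N'(1) by blast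
      show "Select t' y \<in># N' \<or> Reject y \<in># N'" by fact
      show "Match c x y \<in># N'" using N'(3) M1(3) by blast
      show "Select t x \<in># N' \<or> Reject x \<in># N'" using N'(3) M1(2) xy by blast
    qed
  next
    case False
    show ?thesis by (rule that[of M1]) (use False M1 in auto)
  qed
  from step_fin[OF M2(3) xy M2(2) M2(4), of P] obtain N where
    "step (P, M2) (P, N)" "Circ c \<in># N" by blast
  thus ?thesis using M1(1) M2(1)
    by (meson rtranclp.rtrancl_into_rtrancl rtranclp_trans)
qed

end
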